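(* Let $w>2$ and let $\tilde f\in\mathbb L_w$. Write $\tilde f=\tilde f_x x+\tilde f_y y$ with $\tilde f_x,\tilde f_y\in\mathbb A$ homogeneous of degree $w-1$, and put $g=\tilde f_y+\tilde f_x$. Then $g$ is anti-palindromic, i.e. $g=(-1)^{w-1}\mathrm{anti}(g)$, if and only if the mould $M=\mathrm{ma}_{\tilde f}$ satisfies the senary relation $$\mathrm{teru}(M)^r=\bigl(\mathrm{push}\circ\mathrm{mantar}\circ\mathrm{teru}\circ\mathrm{mantar}\bigr)(M)^r$$ for all $1\leqslant r\leqslant w$.
   Context: $\mathbb A=\mathbb Q\langle x,y\rangle$ is the free associative algebra on $x,y$ graded by total degree, and $\mathbb L_w\subset\mathbb A$ is the space of homogeneous Lie polynomials of degree $w$ in $x,y$. $\mathrm{anti}:\mathbb A\to\mathbb A$ is the linear map reversing each word: $\mathrm{anti}(a_1a_2\cdots a_n)=a_n\cdots a_2a_1$ for letters $a_i\in\{x,y\}$. Moulds. A mould is a sequence $M=(M^m)_{m\geqslant 0}$ with $M^0\in\mathbb Q$ and $M^m=M^m(x_1,\dots,x_m)\in\mathbb Q[x_1,\dots,x_m]$; $M^m(u_1,\dots,u_m)$ denotes substitution $x_i\mapsto u_i$. For $m\geqslant1$: $\mathrm{teru}(M)^1=M^1$, and for $m\geqslant2$, $\mathrm{teru}(M)^m(u_1,\dots,u_m)=M^m(u_1,\dots,u_m)+\frac{1}{u_m}\{M^{m-1}(u_1,\dots,u_{m-2},u_{m-1}+u_m)-M^{m-1}(u_1,\dots,u_{m-2},u_{m-1})\}$;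 $\mathrm{mantar}(M)^m(u_1,\dots,u_m)=(-1)^{m-1}M^m(u_m,\dots,u_1)$; $\mathrm{push}(M)^m(u_1,\dots,u_m)=M^m(-u_1-\cdots-u_m,u_1,\dots,u_{m-1})$ (in depth $0$: $\mathrm{teru}(M)^0=\mathrm{push}(M)^0=M^0$, $\mathrm{mantar}(M)^0=-M^0$). The mould $\mathrm{ma}_h$: for $h\in\mathbb A$ homogeneous of degree $w$, write $h=\sum_{r=0}^w\sum a_{e_0,\dots,e_r}x^{e_0}yx^{e_1}y\cdots yx^{e_r}$ (sum over $(e_0,\dots,e_r)\in\mathbb Z_{\geqslant0}^{r+1}$, $\sum e_i=w-r$). Set $\mathrm{ma}_h^0=0$, $\mathrm{ma}_h^r=0$ for $r>w$, and for $1\le r\le w$, $\mathrm{ma}_h^r(u_1,\dots,u_r)=\sum a_{e_0,\dots,e_r}z_0^{e_0}\cdots z_r^{e_r}$ evaluated at $z_0=0$, $z_j=u_1+\cdots+u_j$ (with $0^0=1$). *)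

theory Defs
  imports Complex_Main "HOL-Library.Poly_Mapping"
begin

datatype letter = X | Y

text \<open>Elements of A are coefficient functions on words (lists of letters).
  All elements considered are homogeneous, hence finitely supported.\<close>
type_synonym alg = "letter list \<Rightarrow> rat"

definition amul :: "alg \<Rightarrow> alg \<Rightarrow> alg" where
  "amul p q = (\<lambda>u. \<Sum>i\<le>length u. p (take i u) * q (drop i u))"

definition lt :: "letter \<Rightarrow> alg" where
  "lt a = (\<lambda>u. if u = [a] then 1 else 0)"

definition bracket :: "alg \<Rightarrow> alg \<Rightarrow> alg" where
  "bracket p q = (\<lambda>u. amul p q u - amul q p u)"

definition homog :: "nat \<Rightarrow> alg \<Rightarrow> bool" where
  "homog w p \<longleftrightarrow> (\<forall>u. length u \<noteq> w \<longrightarrow> p u = 0)"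

inductive_set lie_polys :: "alg set" where
  gen: "lt a \<in> lie_polys"
| add: "p \<in> lie_polys \<Longrightarrow> q \<in> lie_polys \<Longrightarrow> (\<lambda>u. p u + q u) \<in> lie_polys"
| smult: "p \<in> lie_polys \<Longrightarrow> (\<lambda>u. c * p u) \<in> lie_polys"
| brk: "p \<in> lie_polys \<Longrightarrow> q \<in> lie_polys \<Longrightarrow> bracket p q \<in> lie_polys"

definition L :: "nat \<Rightarrow> alg set" where
  "L w = {p \<in> lie_polys. homog w p}"

definition anti :: "alg \<Rightarrow> alg" where
  "anti p = (\<lambda>u. p (rev u))"

type_synonym mpoly = "(nat \<Rightarrow>\<^sub>0 nat) \<Rightarrow>\<^sub>0 rat"

definition Var :: "nat \<Rightarrow> mpoly" where
  "Var i = Poly_Mapping.single (Poly_Mapping.single i 1) 1"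

definition Const :: "rat \<Rightarrow> mpoly" where
  "Const c = Poly_Mapping.single 0 c"

definition subst :: "(nat \<Rightarrow> mpoly) \<Rightarrow> mpoly \<Rightarrow> mpoly" where
  "subst \<sigma> p = (\<Sum>k\<in>Poly_Mapping.keys p.
      Const (Poly_Mapping.lookup p k) * (\<Prod>i\<in>Poly_Mapping.keys k. \<sigma> i ^ Poly_Mapping.lookup k i))"

text \<open>Exact division by the variable x_m (used only where the dividend is divisible).\<close>
definition div_var :: "nat \<Rightarrow> mpoly \<Rightarrow> mpoly" where
  "div_var m p = (THE q. p = Var m * q)"

text \<open>A mould: depth m component is a polynomial in x_1..x_m (depth 0: a constant).\<close>
type_synonym mould = "nat \<Rightarrow> mpoly"

definition teru :: "mould \<Rightarrow> mould" where
  "teru M m = (if m \<le> 1 then M m else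
     M m + div_var m (subst (\<lambda>i. if i = m - 1 then Var (m - 1) + Var m else Var i) (M (m - 1))
                      - M (m - 1)))"

definition mantar :: "mould \<Rightarrow> mould" where
  "mantar M m = (if m = 0 then - M 0 else
     (-1) ^ (m - 1) * subst (\<lambda>i. Var (m + 1 - i)) (M m))"

definition push :: "mould \<Rightarrow> mould" where
  "push M m = (if m = 0 then M 0 else
     subst (\<lambda>i. if i = 1 then - (\<Sum>j=1..m. Var j) else Var (i - 1)) (M m))"

text \<open>The word x^{e_0} y x^{e_1} y ... y x^{e_r} for the exponent list [e_0,...,e_r].\<close>
fun wd :: "nat list \<Rightarrow> letter list" where
  "wd [] = []"
| "wd [e] = replicate e X"
| "wd (e # es) = replicate e X @ [Y] @ wd es"

text \<open>ma_h for h homogeneous of degree w; z_j = u_1 + ... + u_j (z_0 = 0, 0^0 = 1).\<close>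
definition ma :: "nat \<Rightarrow> alg \<Rightarrow> mould" where
  "ma w h r = (if r = 0 \<or> r > w then 0 else
     (\<Sum>e\<in>{e. length e = r + 1 \<and> sum_list e = w - r}.
        Const (h (wd e)) * (\<Prod>j\<le>r. (\<Sum>i=1..j. Var i) ^ (e ! j))))"

end

theory Submission
  imports Defs
begin


definition mon :: "(nat \<Rightarrow> mpoly) \<Rightarrow> (nat \<Rightarrow>\<^sub>0 nat) \<Rightarrow> mpoly" where
  "mon \<sigma> k = (\<Prod>i\<in>Poly_Mapping.keys k. \<sigma> i ^ Poly_Mapping.lookup k i)"

lemma mon_superset:
  assumes "finite A" "Poly_Mapping.keys k \<subseteq> A"
  shows "mon \<sigma> k = (\<Prod>i\<in>A. \<sigma> i ^ Poly_Mapping.lookup k i)"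
  unfolding mon_def
  by (rule prod.mono_neutral_left) (use assms in \<open>auto simp: in_keys_iff\<close>)

lemma keys_add_nat: "Poly_Mapping.keys (k + l) = Poly_Mapping.keys k \<union> Poly_Mapping.keys (l :: nat \<Rightarrow>\<^sub>0 nat)"
  by (auto simp: in_keys_iff lookup_add)

lemma mon_add: "mon \<sigma> (k + l) = mon \<sigma> k * mon \<sigma> l"
proof -
  let ?A = "Poly_Mapping.keys k \<union> Poly_Mapping.keys l"
  have "mon \<sigma> (k + l) = (\<Prod>i\<in>?A. \<sigma> i ^ Poly_Mapping.lookup (k+l) i)"
    by (rule mon_superset) (auto simp: keys_add_nat)
  also have "\<dots> = (\<Prod>i\<in>?A. \<sigma> i ^ Poly_Mapping.lookup k i * \<sigma> i ^ Poly_Mapping.lookup l i)"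
    by (simp add: lookup_add power_add)
  also have "\<dots> = mon \<sigma> k * mon \<sigma> l"
    by (simp add: prod.distrib mon_superset[of ?A])
  finally show ?thesis .
qed

lemma mon_zero [simp]: "mon \<sigma> 0 = 1"
  by (simp add: mon_def)

lemma subst_alt: "subst \<sigma> p = (\<Sum>k\<in>Poly_Mapping.keys p. Const (Poly_Mapping.lookup p k) * mon \<sigma> k)"
  by (simp add: subst_def mon_def)

lemma Const_add: "Const (a + b) = Const a + Const b"
  by (simp add: Const_def single_add)

lemma Const_0 [simp]: "Const 0 = 0"
  by (simp add: Const_def)

lemma Const_1 [simp]: "Const 1 = 1"
  by (simp add: Const_def)

lemma Const_mult: "Const (a * b) = Const a * Const b"
  by (simp add: Const_def mult_single)

lemma subst_add: "subst \<sigma> (p + q) = subst \<sigma> p + subst \<sigma> q"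
  unfolding subst_alt
  by (rule setsum_keys_plus_distrib) (auto simp: Const_add distrib_right)

lemma subst_0 [simp]: "subst \<sigma> 0 = 0"
  by (simp add: subst_alt)

lemma subst_single: "subst \<sigma> (Poly_Mapping.single k c) = Const c * mon \<sigma> k"
  by (cases "c = 0") (simp_all add: subst_alt)

lemma update_as_add:
  assumes "a \<notin> Poly_Mapping.keys f"
  shows "Poly_Mapping.update a b f = f + Poly_Mapping.single a b"
  using assms by (intro poly_mapping_eqI) (auto simp: lookup_update lookup_add lookup_single in_keys_iff when_def)

lemma subst_mult_single: "subst \<sigma> (Poly_Mapping.single k c * q) = subst \<sigma> (Poly_Mapping.single k c) * subst \<sigma> q"
proof (induction q rule: update_induct)
  case const
  then show ?case by simp
next
  case (update f a b)
  then show ?case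
    by (simp add: update_as_add distrib_left subst_add subst_single mult_single mon_add Const_mult algebra_simps)
qed

lemma subst_mult: "subst \<sigma> (p * q) = subst \<sigma> p * subst \<sigma> q"
proof (induction p rule: update_induct)
  case const
  then show ?case by simp
next
  case (update f a b)
  then show ?case
    by (simp add: update_as_add distrib_right subst_add subst_mult_single)
qed

lemma subst_uminus: "subst \<sigma> (- p) = - subst \<sigma> p"
proof -
  have "subst \<sigma> p + subst \<sigma> (- p) = 0" by (metis subst_add subst_0 add.right_inverse)
  then show ?thesis by (simp add: eq_neg_iff_add_eq_0 add.commute)
qed

lemma subst_diff: "subst \<sigma> (p - q) = subst \<sigma> p - subst \<sigma> q"
  using subst_add[of \<sigma> p "- q"] by (simp add: subst_uminus)

lemma subst_Const [simp]: "subst \<sigma> (Const c) = Const c"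
  by (simp add: Const_def subst_single)

lemma subst_1 [simp]: "subst \<sigma> 1 = 1"
  using subst_Const[of \<sigma> 1] by simp

lemma subst_Var [simp]: "subst \<sigma> (Var i) = \<sigma> i"
  by (simp add: Var_def subst_single mon_def)

lemma subst_sum: "subst \<sigma> (sum f A) = (\<Sum>a\<in>A. subst \<sigma> (f a))"
  by (induction A rule: infinite_finite_induct) (simp_all add: subst_add)

lemma subst_prod: "subst \<sigma> (prod f A) = (\<Prod>a\<in>A. subst \<sigma> (f a))"
  by (induction A rule: infinite_finite_induct) (simp_all add: subst_mult)

lemma subst_power: "subst \<sigma> (p ^ n) = subst \<sigma> p ^ n"
  by (induction n) (simp_all add: subst_mult)

lemma subst_neg1_power: "subst \<sigma> ((-1) ^ n) = (-1) ^ n"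
  by (simp add: subst_power subst_uminus)

lemma Var_nonzero: "Var i \<noteq> 0"
  by (metis Var_def lookup_single_eq lookup_zero one_neq_zero)

lemma div_var_eq: "p = Var m * q \<Longrightarrow> div_var m p = q"
  unfolding div_var_def by (rule the_equality) (auto simp: Var_nonzero)



lemma UNIV_letter: "UNIV = {X, Y}"
  using letter.exhaust by auto

instance letter :: finite
  by standard (simp add: UNIV_letter)

definition ny :: "letter list \<Rightarrow> nat" where
  "ny u = length (filter (\<lambda>a. a = Y) u)"

lemma ny_simps [simp]: "ny [] = 0" "ny (X # u) = ny u" "ny (Y # u) = Suc (ny u)"
  "ny (u @ v) = ny u + ny v" "ny (rev u) = ny u"
  by (simp_all add: ny_def rev_filter[symmetric])

lemma ny_le: "ny u \<le> length u"
  by (simp add: ny_def)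

fun vm :: "letter list \<Rightarrow> (nat \<Rightarrow> mpoly) \<Rightarrow> mpoly" where
  "vm [] z = 1"
| "vm (X # u) z = z 0 * vm u z"
| "vm (Y # u) z = vm u (\<lambda>j. z (Suc j))"

lemma vm_append: "vm (v @ w) z = vm v z * vm w (\<lambda>j. z (j + ny v))"
proof (induction v arbitrary: z)
  case Nil then show ?case by simp
next
  case (Cons a v)
  then show ?case by (cases a) (simp_all add: mult.assoc)
qed

lemma vm_cong: "(\<And>j. j \<le> ny u \<Longrightarrow> z j = z' j) \<Longrightarrow> vm u z = vm u z'"
proof (induction u arbitrary: z z')
  case Nil then show ?case by simp
next
  case (Cons a u)
  show ?case
  proof (cases a)
    case X
    with Cons.prems show ?thesis using Cons.IH[of z z'] by simp
  next
    case Y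
    with Cons.prems show ?thesis using Cons.IH[of "\<lambda>j. z (Suc j)" "\<lambda>j. z' (Suc j)"] by simp
  qed
qed

lemma vm_subst: "subst \<sigma> (vm u z) = vm u (\<lambda>j. subst \<sigma> (z j))"
proof (induction u arbitrary: z)
  case Nil then show ?case by simp
next
  case (Cons a u)
  then show ?case by (cases a) (simp_all add: subst_mult)
qed

lemma vm_rev: "vm (rev u) z = vm u (\<lambda>j. z (ny u - j))"
proof (induction u arbitrary: z)
  case Nil then show ?case by simp
next
  case (Cons a u)
  show ?case
  proof (cases a)
    case X
    then show ?thesis using Cons.IH[of z] by (simp add: vm_append mult.commute)
  next
    case Y
    then show ?thesis using Cons.IH[of z] by (simp add: vm_append)
  qed
qed

lemma vm_scale: "vm u (\<lambda>j. c * z j) = c ^ (length u - ny u) * vm u z"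
proof (induction u arbitrary: z)
  case Nil then show ?case by simp
next
  case (Cons a u)
  have le: "ny u \<le> length u" by (rule ny_le)
  show ?case
  proof (cases a)
    case X
    then show ?thesis using Cons.IH[of z] le by (simp add: Suc_diff_le algebra_simps)
  next
    case Y
    then show ?thesis using Cons.IH[of "\<lambda>j. z (Suc j)"] by simp
  qed
qed

lemma vm_replicate_X: "vm (replicate n X) z = z 0 ^ n"
  by (induction n) simp_all

definition Lw :: "nat \<Rightarrow> letter list set" where
  "Lw n = {u. length u = n}"

lemma finite_Lw [simp]: "finite (Lw n)"
proof -
  have "finite {xs. set xs \<subseteq> (UNIV::letter set) \<and> length xs = n}"
    by (rule finite_lists_length_eq) simp
  then show ?thesis by (simp add: Lw_def)
qed

definition VV :: "nat \<Rightarrow> alg \<Rightarrow> nat \<Rightarrow> (nat \<Rightarrow> mpoly) \<Rightarrow> mpoly" where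
  "VV n p r z = (\<Sum>u\<in>Lw n. if ny u = r then Const (p u) * vm u z else 0)"

lemma sum_Lw_rev: "(\<Sum>u\<in>Lw n. F (rev u)) = (\<Sum>u\<in>Lw n. F u)"
  by (rule sum.reindex_bij_witness[where i=rev and j=rev]) (auto simp: Lw_def)

lemma sum_Lw_snoc: "(\<Sum>u\<in>Lw (Suc m). F u) = (\<Sum>v\<in>Lw m. F (v @ [X]) + F (v @ [Y]))"
proof -
  have "(\<Sum>u\<in>Lw (Suc m). F u) = (\<Sum>(v,a)\<in>Lw m \<times> UNIV. F (v @ [a]))"
    by (rule sum.reindex_bij_witness[where i="\<lambda>(v,a). v @ [a]" and j="\<lambda>u. (butlast u, last u)"])
       (auto simp: Lw_def, (metis append_butlast_last_id list.size(3) nat.distinct(1))+)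
  also have "\<dots> = (\<Sum>v\<in>Lw m. \<Sum>a\<in>UNIV. F (v @ [a]))"
    by (simp add: sum.cartesian_product)
  also have "\<dots> = (\<Sum>v\<in>Lw m. F (v @ [X]) + F (v @ [Y]))"
    by (simp add: UNIV_letter)
  finally show ?thesis .
qed

lemma sum_Lw_split:
  assumes "i \<le> n"
  shows "(\<Sum>u\<in>Lw n. F (take i u) (drop i u)) = (\<Sum>u1\<in>Lw i. \<Sum>u2\<in>Lw (n - i). F u1 u2)"
proof -
  have "(\<Sum>u\<in>Lw n. F (take i u) (drop i u)) = (\<Sum>(u1,u2)\<in>Lw i \<times> Lw (n - i). F u1 u2)"
    by (rule sum.reindex_bij_witness[where i="\<lambda>(u1,u2). u1 @ u2" and j="\<lambda>u. (take i u, drop i u)"])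
       (use assms in \<open>auto simp: Lw_def\<close>)
  then show ?thesis by (simp add: sum.cartesian_product)
qed

lemma VV_add: "VV n (\<lambda>u. p u + q u) r z = VV n p r z + VV n q r z"
  by (simp add: VV_def Const_add distrib_right sum.distrib[symmetric] if_distrib cong: if_cong)

lemma Const_uminus: "Const (- a) = - Const a"
  by (simp add: Const_def single_uminus)

lemma Const_diff: "Const (a - b) = Const a - Const b"
  by (simp add: Const_def single_diff)

lemma VV_diff: "VV n (\<lambda>u. p u - q u) r z = VV n p r z - VV n q r z"
  unfolding VV_def sum_subtractf[symmetric] by (intro sum.cong) (auto simp: Const_diff left_diff_distrib)

lemma VV_smult: "VV n (\<lambda>u. c * p u) r z = Const c * VV n p r z"
  unfolding VV_def sum_distrib_left by (intro sum.cong) (auto simp: Const_mult mult.assoc)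

lemma VV_cong: "(\<And>j. j \<le> r \<Longrightarrow> z j = z' j) \<Longrightarrow> VV n p r z = VV n p r z'"
  unfolding VV_def by (intro sum.cong refl) (auto intro!: vm_cong)

lemma VV_subst: "subst \<sigma> (VV n p r z) = VV n p r (\<lambda>j. subst \<sigma> (z j))"
  by (simp add: VV_def subst_sum subst_mult vm_subst if_distrib cong: if_cong)

lemma VV_rev: "VV n p r (\<lambda>j. z (r - j)) = VV n (\<lambda>u. p (rev u)) r z"
proof -
  have "VV n p r (\<lambda>j. z (r - j)) = (\<Sum>u\<in>Lw n. if ny (rev u) = r then Const (p (rev (rev u))) * vm (rev u) z else 0)"
    unfolding VV_def by (intro sum.cong refl) (auto simp: vm_rev)
  also have "\<dots> = VV n (\<lambda>u. p (rev u)) r z"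
    unfolding VV_def by (rule sum_Lw_rev[where F="\<lambda>u. if ny u = r then Const (p (rev u)) * vm u z else 0"])
  finally show ?thesis .
qed

lemma VV_scale: "VV n p r (\<lambda>j. c * z j) = c ^ (n - r) * VV n p r z"
  unfolding VV_def sum_distrib_left
  by (intro sum.cong refl) (auto simp: vm_scale Lw_def)

lemma VV_snoc: "VV (Suc m) p r z = VV m (\<lambda>v. p (v @ [X])) r z * z r
   + (if r = 0 then 0 else VV m (\<lambda>v. p (v @ [Y])) (r - 1) z)"
proof -
  have "VV (Suc m) p r z = (\<Sum>v\<in>Lw m. (if ny v = r then Const (p (v @ [X])) * vm v z else 0) * z r)
     + (\<Sum>v\<in>Lw m. if Suc (ny v) = r then Const (p (v @ [Y])) * vm v z else 0)"
    unfolding VV_def sum_Lw_snoc sum.distrib[symmetric] by (intro sum.cong refl) (auto simp: vm_append mult.assoc)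
  then show ?thesis by (cases r) (simp_all add: VV_def sum_distrib_right)
qed

lemma ny_0_iff: "ny u = 0 \<longleftrightarrow> u = replicate (length u) X"
proof (induction u)
  case Nil then show ?case by simp
next
  case (Cons a u) then show ?case by (cases a) simp_all
qed

lemma VV_depth0: "VV n p 0 z = Const (p (replicate n X)) * z 0 ^ n"
proof -
  have "VV n p 0 z = (\<Sum>u\<in>Lw n. if u = replicate n X then Const (p u) * vm u z else 0)"
    unfolding VV_def
    by (intro sum.cong refl) (auto simp: Lw_def ny_0_iff[where u="replicate _ _"] dest: ny_0_iff[THEN iffD1])
  also have "\<dots> = Const (p (replicate n X)) * z 0 ^ n"
    by (subst sum.delta[OF finite_Lw]) (simp add: Lw_def vm_replicate_X)
  finally show ?thesis .
qed



lemma Const_sum: "Const (sum f A) = (\<Sum>a\<in>A. Const (f a))"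
  by (induction A rule: infinite_finite_induct) (simp_all add: Const_add)

lemma ny_delta:
  "(if a + b = (r::nat) then G a else (0::mpoly)) = (\<Sum>s\<le>r. if a = s then (if b = r - s then G s else 0) else 0)"
proof -
  have "(\<Sum>s\<le>r. if a = s then (if b = r - s then G s else 0) else 0) = (if a \<in> {..r} then (if b = r - a then G a else 0) else 0)"
    by (rule sum.delta') simp
  then show ?thesis by auto
qed

lemma VV_amul: "VV n (amul p q) r z =
   (\<Sum>i\<le>n. \<Sum>s\<le>r. VV i p s z * VV (n - i) q (r - s) (\<lambda>j. z (j + s)))"
proof -
  define F where "F = (\<lambda>u1 u2. if ny u1 + ny u2 = r then Const (p u1) * Const (q u2) * (vm u1 z * vm u2 (\<lambda>j. z (j + ny u1))) else 0)"
  have "VV n (amul p q) r z = (\<Sum>u\<in>Lw n. \<Sum>i\<le>n. F (take i u) (drop i u))"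
    unfolding VV_def
  proof (intro sum.cong refl)
    fix u assume "u \<in> Lw n"
    then have len: "length u = n" by (simp add: Lw_def)
    have "\<And>i. ny u = ny (take i u) + ny (drop i u)"
      by (metis append_take_drop_id ny_simps(4))
    moreover have "\<And>i. vm u z = vm (take i u) z * vm (drop i u) (\<lambda>j. z (j + ny (take i u)))"
      by (metis append_take_drop_id vm_append)
    ultimately show "(if ny u = r then Const (amul p q u) * vm u z else 0) = (\<Sum>i\<le>n. F (take i u) (drop i u))"
      unfolding F_def amul_def len Const_sum sum_distrib_right
      by (auto simp: Const_mult mult.assoc)
  qed
  also have "\<dots> = (\<Sum>i\<le>n. \<Sum>u\<in>Lw n. F (take i u) (drop i u))"
    by (rule sum.swap)
  also have "\<dots> = (\<Sum>i\<le>n. \<Sum>u1\<in>Lw i. \<Sum>u2\<in>Lw (n - i). F u1 u2)"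
    by (intro sum.cong refl sum_Lw_split) simp
  also have "\<dots> = (\<Sum>i\<le>n. \<Sum>s\<le>r. VV i p s z * VV (n - i) q (r - s) (\<lambda>j. z (j + s)))"
  proof (intro sum.cong refl)
    fix i
    have "(\<Sum>s\<le>r. VV i p s z * VV (n - i) q (r - s) (\<lambda>j. z (j + s)))
      = (\<Sum>s\<le>r. \<Sum>u1\<in>Lw i. \<Sum>u2\<in>Lw (n - i). if ny u1 = s then (if ny u2 = r - s then
           Const (p u1) * Const (q u2) * (vm u1 z * vm u2 (\<lambda>j. z (j + s))) else 0) else 0)"
      unfolding VV_def sum_product by (intro sum.cong refl) (auto simp: algebra_simps)
    also have "\<dots> = (\<Sum>u1\<in>Lw i. \<Sum>u2\<in>Lw (n - i). \<Sum>s\<le>r. if ny u1 = s then (if ny u2 = r - s then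
           Const (p u1) * Const (q u2) * (vm u1 z * vm u2 (\<lambda>j. z (j + s))) else 0) else 0)"
      by (subst sum.swap) (simp add: sum.swap[where A="{..r}"])
    also have "\<dots> = (\<Sum>u1\<in>Lw i. \<Sum>u2\<in>Lw (n - i). F u1 u2)"
      unfolding F_def by (intro sum.cong refl) (rule ny_delta[symmetric, where G="\<lambda>s. Const (p _) * Const (q _) * (vm _ z * vm _ (\<lambda>j. z (j + s)))"])
    finally show "(\<Sum>u1\<in>Lw i. \<Sum>u2\<in>Lw (n - i). F u1 u2) = (\<Sum>s\<le>r. VV i p s z * VV (n - i) q (r - s) (\<lambda>j. z (j + s)))"
      by simp
  qed
  finally show ?thesis .
qed



lemma sum_atMost_flip: "(\<Sum>i\<le>n. g (n - i)) = (\<Sum>i\<le>(n::nat). g i)"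
  by (rule sum.reindex_bij_witness[where i="\<lambda>i. n - i" and j="\<lambda>i. n - i"]) auto

lemma amul_rev:
  assumes p: "\<And>u. p (rev u) = (-1) ^ Suc (length u) * p u"
    and q: "\<And>u. q (rev u) = (-1) ^ Suc (length u) * q u"
  shows "amul p q (rev u) = (-1) ^ length u * amul q p u"
proof -
  let ?n = "length u"
  have "amul p q (rev u) = (\<Sum>i\<le>?n. p (rev (drop (?n - i) u)) * q (rev (take (?n - i) u)))"
    by (simp add: amul_def take_rev drop_rev)
  also have "\<dots> = (\<Sum>i\<le>?n. (-1) ^ ?n * (q (take (?n - i) u) * p (drop (?n - i) u)))"
  proof (intro sum.cong refl)
    fix i assume "i \<in> {..?n}"
    then have i: "i \<le> ?n" by simp
    have l1: "length (drop (?n - i) u) = i" using i by simp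
    have l2: "length (take (?n - i) u) = ?n - i" by simp
    have e1: "p (rev (drop (?n - i) u)) = (-1) ^ Suc i * p (drop (?n - i) u)"
      using p[of "drop (?n - i) u"] l1 by simp
    have e2: "q (rev (take (?n - i) u)) = (-1) ^ Suc (?n - i) * q (take (?n - i) u)"
      using q[of "take (?n - i) u"] l2 by simp
    have e3: "(-1::rat) ^ Suc i * (-1) ^ Suc (?n - i) = (-1) ^ ?n"
    proof -
      have "(-1::rat) ^ Suc i * (-1) ^ Suc (?n - i) = (-1) ^ (?n + 2)"
        unfolding power_add[symmetric] using i by simp
      then show ?thesis by simp
    qed
    show "p (rev (drop (?n - i) u)) * q (rev (take (?n - i) u)) = (-1) ^ ?n * (q (take (?n - i) u) * p (drop (?n - i) u))"
      unfolding e1 e2 e3[symmetric] by (simp add: algebra_simps)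
  qed
  also have "\<dots> = (\<Sum>i\<le>?n. (-1) ^ ?n * (q (take i u) * p (drop i u)))"
    by (rule sum_atMost_flip[where g="\<lambda>i. (-1) ^ ?n * (q (take i u) * p (drop i u))"])
  also have "\<dots> = (-1) ^ ?n * amul q p u"
    by (simp add: amul_def sum_distrib_left)
  finally show ?thesis .
qed

lemma lie_anti: "p \<in> lie_polys \<Longrightarrow> p (rev u) = (-1) ^ Suc (length u) * p u"
proof (induction p arbitrary: u rule: lie_polys.induct)
  case (gen a)
  then show ?case by (cases "u = [a]") (auto simp: lt_def)
next
  case (add p q)
  then show ?case by (simp add: algebra_simps)
next
  case (smult p c)
  then show ?case by (simp add: algebra_simps)
next
  case (brk p q)
  have "bracket p q (rev u) = (-1) ^ length u * (amul q p u - amul p q u)"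
    unfolding bracket_def using amul_rev[of p q u] amul_rev[of q p u] brk.IH
    by (simp add: algebra_simps)
  then show ?case by (simp add: bracket_def algebra_simps)
qed

lemma bracket_replicate: "bracket p q (replicate n X) = 0"
proof -
  have "amul p q (replicate n X) = (\<Sum>i\<le>n. p (replicate i X) * q (replicate (n - i) X))"
    unfolding amul_def by (intro sum.cong refl) (auto simp: take_replicate drop_replicate min_def)
  also have "\<dots> = (\<Sum>i\<le>n. p (replicate (n - i) X) * q (replicate (n - (n - i)) X))"
    by (rule sum_atMost_flip[symmetric, where g="\<lambda>i. p (replicate i X) * q (replicate (n - i) X)"])
  also have "\<dots> = amul q p (replicate n X)"
    unfolding amul_def by (intro sum.cong refl) (auto simp: take_replicate drop_replicate min_def mult.commute)
  finally show ?thesis by (simp add: bracket_def)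
qed

lemma lie_repl: "p \<in> lie_polys \<Longrightarrow> 2 \<le> n \<Longrightarrow> p (replicate n X) = 0"
proof (induction p rule: lie_polys.induct)
  case (gen a)
  have "length (replicate n X) \<noteq> length [a]" using gen by simp
  then have "replicate n X \<noteq> [a]" by metis
  then show ?case by (simp add: lt_def)
next
  case (brk p q)
  then show ?case by (simp add: bracket_replicate)
qed simp_all



definition Ef :: "mpoly \<Rightarrow> nat \<Rightarrow> nat \<Rightarrow> mpoly" where
  "Ef c n r = (if n = 1 \<and> r = 0 then c else 0)"

lemma sum2_delta: "(\<Sum>i\<le>(n::nat). \<Sum>s\<le>r. if i = a \<and> s = b then K else (0::mpoly)) = (if a \<le> n \<and> b \<le> (r::nat) then K else 0)"
proof -
  have "(\<Sum>i\<le>n. \<Sum>s\<le>r. if i = a \<and> s = b then K else (0::mpoly)) = (\<Sum>i\<le>n. if i = a then (if b \<le> r then K else 0) else 0)"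
    by (intro sum.cong refl) simp
  also have "\<dots> = (if a \<le> n \<and> b \<le> (r::nat) then K else 0)"
    by simp
  finally show ?thesis .
qed

lemma sum_Ef_left: "(\<Sum>i\<le>n. \<Sum>s\<le>r. Ef c i s * F i s) = (if 1 \<le> n then c * F 1 0 else 0)"
proof -
  have "(\<Sum>i\<le>n. \<Sum>s\<le>r. Ef c i s * F i s) = (\<Sum>i\<le>n. \<Sum>s\<le>r. if i = 1 \<and> s = 0 then c * F 1 0 else 0)"
    unfolding Ef_def by (intro sum.cong refl) auto
  also have "\<dots> = (if 1 \<le> n then c * F 1 0 else 0)"
    by (simp add: sum2_delta)
  finally show ?thesis .
qed

lemma sum_Ef_right: "(\<Sum>i\<le>n. \<Sum>s\<le>r. F i s * Ef c (n - i) (r - s)) = (if 1 \<le> n then F (n - 1) r * c else 0)"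
proof -
  have "(\<Sum>i\<le>n. \<Sum>s\<le>r. F i s * Ef c (n - i) (r - s)) =
     (\<Sum>i\<le>n. \<Sum>s\<le>r. if i = n - 1 \<and> s = r then (if 1 \<le> n then F (n - 1) r * c else 0) else 0)"
    unfolding Ef_def by (intro sum.cong refl) auto
  also have "\<dots> = (if 1 \<le> n then F (n - 1) r * c else 0)"
    by (simp add: sum2_delta)
  finally show ?thesis .
qed

lemma VV_lt: "VV n (lt a) r z = (if n = 1 \<and> ny [a] = r then vm [a] z else 0)"
proof -
  have "VV n (lt a) r z = (\<Sum>u\<in>Lw n. if u = [a] then (if ny [a] = r then vm [a] z else 0) else 0)"
    unfolding VV_def by (intro sum.cong refl) (auto simp: lt_def)
  also have "\<dots> = (if n = 1 \<and> ny [a] = r then vm [a] z else 0)"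
    by (subst sum.delta[OF finite_Lw]) (auto simp: Lw_def)
  finally show ?thesis .
qed

lemma lie_trans: "p \<in> lie_polys \<Longrightarrow>
  VV n p r (\<lambda>j. z j + t) = VV n p r z + Ef (Const (p [X]) * t) n r"
proof (induction p arbitrary: n r z rule: lie_polys.induct)
  case (gen a)
  have "lt X [X] = 1" "lt Y [X] = 0" by (simp_all add: lt_def)
  then show ?case by (cases a) (auto simp only: VV_lt Ef_def, auto)
next
  case (add p q)
  then show ?case by (simp add: VV_add Ef_def Const_add algebra_simps)
next
  case (smult p c)
  then show ?case by (simp add: VV_smult Ef_def Const_mult algebra_simps)
next
  case (brk p q)
  define cp where "cp = Const (p [X]) * t"
  define cq where "cq = Const (q [X]) * t"
  have IHp: "\<And>n r z. VV n p r (\<lambda>j. z j + t) = VV n p r z + Ef cp n r"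
    using brk.IH(1) by (simp add: cp_def)
  have IHq: "\<And>n r z. VV n q r (\<lambda>j. z j + t) = VV n q r z + Ef cq n r"
    using brk.IH(2) by (simp add: cq_def)
  define P where "P i s = VV i p s z" for i s
  define Q where "Q i s = VV i q s z" for i s
  define P' where "P' i s = VV (n - i) p (r - s) (\<lambda>j. z (j + s))" for i s
  define Q' where "Q' i s = VV (n - i) q (r - s) (\<lambda>j. z (j + s))" for i s
  have A: "VV n (amul p q) r (\<lambda>j. z j + t) = (\<Sum>i\<le>n. \<Sum>s\<le>r. (P i s + Ef cp i s) * (Q' i s + Ef cq (n - i) (r - s)))"
    unfolding VV_amul P_def Q'_def by (simp add: IHp IHq)
  have B: "VV n (amul q p) r (\<lambda>j. z j + t) = (\<Sum>i\<le>n. \<Sum>s\<le>r. (Q i s + Ef cq i s) * (P' i s + Ef cp (n - i) (r - s)))"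
    unfolding VV_amul Q_def P'_def by (simp add: IHp IHq)
  have A0: "VV n (amul p q) r z = (\<Sum>i\<le>n. \<Sum>s\<le>r. P i s * Q' i s)"
    unfolding VV_amul P_def Q'_def by simp
  have B0: "VV n (amul q p) r z = (\<Sum>i\<le>n. \<Sum>s\<le>r. Q i s * P' i s)"
    unfolding VV_amul Q_def P'_def by simp
  have A1: "(\<Sum>i\<le>n. \<Sum>s\<le>r. (P i s + Ef cp i s) * (Q' i s + Ef cq (n - i) (r - s)))
    = (\<Sum>i\<le>n. \<Sum>s\<le>r. P i s * Q' i s) + (\<Sum>i\<le>n. \<Sum>s\<le>r. Ef cp i s * Q' i s)
      + (\<Sum>i\<le>n. \<Sum>s\<le>r. P i s * Ef cq (n - i) (r - s)) + (\<Sum>i\<le>n. \<Sum>s\<le>r. Ef cp i s * Ef cq (n - i) (r - s))"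
    by (simp add: algebra_simps sum.distrib)
  have B1: "(\<Sum>i\<le>n. \<Sum>s\<le>r. (Q i s + Ef cq i s) * (P' i s + Ef cp (n - i) (r - s)))
    = (\<Sum>i\<le>n. \<Sum>s\<le>r. Q i s * P' i s) + (\<Sum>i\<le>n. \<Sum>s\<le>r. Q i s * Ef cp (n - i) (r - s))
      + (\<Sum>i\<le>n. \<Sum>s\<le>r. Ef cq i s * P' i s) + (\<Sum>i\<le>n. \<Sum>s\<le>r. Ef cq i s * Ef cp (n - i) (r - s))"
    by (simp add: algebra_simps sum.distrib)
  have C1: "(\<Sum>i\<le>n. \<Sum>s\<le>r. Ef cp i s * Q' i s) = (\<Sum>i\<le>n. \<Sum>s\<le>r. Q i s * Ef cp (n - i) (r - s))"
    unfolding sum_Ef_left sum_Ef_right by (simp add: Q_def Q'_def mult.commute)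
  have C2: "(\<Sum>i\<le>n. \<Sum>s\<le>r. P i s * Ef cq (n - i) (r - s)) = (\<Sum>i\<le>n. \<Sum>s\<le>r. Ef cq i s * P' i s)"
    unfolding sum_Ef_left sum_Ef_right by (simp add: P_def P'_def mult.commute)
  have C3: "(\<Sum>i\<le>n. \<Sum>s\<le>r. Ef cp i s * Ef cq (n - i) (r - s)) = (\<Sum>i\<le>n. \<Sum>s\<le>r. Ef cq i s * Ef cp (n - i) (r - s))"
    by (intro sum.cong refl) (auto simp: Ef_def)
  have br: "bracket p q [X] = 0"
    by (simp add: bracket_def amul_def)
  have "VV n (bracket p q) r (\<lambda>j. z j + t) = VV n (amul p q) r (\<lambda>j. z j + t) - VV n (amul q p) r (\<lambda>j. z j + t)"
    unfolding bracket_def by (rule VV_diff)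
  also have "\<dots> = VV n (amul p q) r z - VV n (amul q p) r z"
    unfolding A B A1 B1 A0 B0 C1 C2 C3 by simp
  also have "\<dots> = VV n (bracket p q) r z"
    unfolding bracket_def by (rule VV_diff[symmetric])
  finally show ?case by (simp add: br Ef_def)
qed



fun blocks :: "letter list \<Rightarrow> nat list" where
  "blocks [] = [0]"
| "blocks (X # u) = (case blocks u of [] \<Rightarrow> [] | a # es \<Rightarrow> Suc a # es)"
| "blocks (Y # u) = 0 # blocks u"

lemma blocks_ne: "blocks u \<noteq> []"
proof (induction u)
  case Nil then show ?case by simp
next
  case (Cons a u) then show ?case by (cases a) (auto split: list.split)
qed

lemma wd_Suc: "wd (Suc a # es) = X # wd (a # es)"
  by (cases es) simp_all

lemma wd_0: "es \<noteq> [] \<Longrightarrow> wd (0 # es) = Y # wd es"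
  by (cases es) simp_all

lemma wd_blocks: "wd (blocks u) = u"
proof (induction u)
  case Nil then show ?case by simp
next
  case (Cons a u)
  show ?case
  proof (cases a)
    case X
    obtain b es where b: "blocks u = b # es" using blocks_ne by (cases "blocks u") auto
    then show ?thesis using X Cons.IH by (simp add: wd_Suc)
  next
    case Y
    then show ?thesis using Cons.IH blocks_ne by (simp add: wd_0)
  qed
qed

lemma ny_replicate_X [simp]: "ny (replicate a X) = 0"
  by (induction a) simp_all

lemma blocks_rep_app: "blocks v = c # cs \<Longrightarrow> blocks (replicate a X @ v) = (c + a) # cs"
  by (induction a) simp_all

lemma blocks_replicate: "blocks (replicate a X) = [a]"
  using blocks_rep_app[of "[]" 0 "[]" a] by simp

lemma blocks_wd: "e \<noteq> [] \<Longrightarrow> blocks (wd e) = e"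
proof (induction e rule: wd.induct)
  case 1 then show ?case by simp
next
  case (2 e) then show ?case by (simp add: blocks_replicate)
next
  case (3 e v va)
  then have "blocks (Y # wd (v # va)) = 0 # v # va" by simp
  then show ?case by (simp add: blocks_rep_app)
qed

lemma length_blocks: "length (blocks u) = Suc (ny u)"
proof (induction u)
  case Nil then show ?case by simp
next
  case (Cons a u)
  then show ?case using blocks_ne[of u] by (cases a) (auto split: list.split)
qed

lemma sum_blocks: "sum_list (blocks u) = length u - ny u"
proof (induction u)
  case Nil then show ?case by simp
next
  case (Cons a u)
  have "ny u \<le> length u" by (rule ny_le)
  then show ?case using Cons blocks_ne[of u] by (cases a) (auto split: list.split simp: Suc_diff_le)
qed

lemma vm_rep_app: "vm (replicate a X @ v) z = z 0 ^ a * vm v z"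
  by (simp add: vm_append vm_replicate_X)

lemma vm_wd: "e \<noteq> [] \<Longrightarrow> vm (wd e) z = (\<Prod>j<length e. z j ^ (e ! j))"
proof (induction e arbitrary: z rule: wd.induct)
  case 1 then show ?case by simp
next
  case (2 e) then show ?case by (simp add: vm_replicate_X)
next
  case (3 e v va)
  have "vm (wd (e # v # va)) z = z 0 ^ e * vm (wd (v # va)) (\<lambda>j. z (Suc j))"
    by (simp add: vm_rep_app)
  also have "\<dots> = z 0 ^ e * (\<Prod>j<length (v # va). z (Suc j) ^ ((v # va) ! j))"
    using 3 by simp
  also have "\<dots> = (\<Prod>j<length (e # v # va). z j ^ ((e # v # va) ! j))"
    by (simp only: length_Cons prod.lessThan_Suc_shift) simp
  finally show ?case .
qed

lemma ma_VV:
  assumes "1 \<le> r" "r \<le> w"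
  shows "ma w h r = VV w h r (\<lambda>j. \<Sum>i=1..j. Var i)"
proof -
  let ?Z = "\<lambda>j. \<Sum>i=1..j. Var i"
  let ?E = "{e. length e = r + 1 \<and> sum_list e = w - r}"
  have "ma w h r = (\<Sum>e\<in>?E. Const (h (wd e)) * (\<Prod>j\<le>r. ?Z j ^ (e ! j)))"
    using assms by (simp add: ma_def)
  also have "\<dots> = (\<Sum>u\<in>{u \<in> Lw w. ny u = r}. Const (h u) * vm u ?Z)"
  proof (rule sum.reindex_bij_witness[where i=blocks and j=wd])
    fix u assume "u \<in> {u \<in> Lw w. ny u = r}"
    then show "wd (blocks u) = u" "blocks u \<in> ?E"
      by (auto simp: wd_blocks length_blocks sum_blocks Lw_def)
  next
    fix e assume e: "e \<in> ?E"
    then have ne: "e \<noteq> []" by auto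
    show "blocks (wd e) = e" using ne by (rule blocks_wd)
    have "length (wd e) = length (blocks (wd e)) - 1 + sum_list (blocks (wd e))"
      using ny_le[of "wd e"] by (simp add: length_blocks sum_blocks)
    then have "length (wd e) = w" using e assms by (simp add: blocks_wd[OF ne])
    moreover have "ny (wd e) = r"
      using length_blocks[of "wd e"] e by (simp add: blocks_wd[OF ne])
    ultimately show "wd e \<in> {u \<in> Lw w. ny u = r}" by (simp add: Lw_def)
    show "Const (h (wd e)) * vm (wd e) ?Z = Const (h (wd e)) * (\<Prod>j\<le>r. ?Z j ^ (e ! j))"
      using e ne by (simp add: vm_wd lessThan_Suc_atMost)
  qed
  also have "\<dots> = VV w h r ?Z"
    unfolding VV_def by (simp only: sum.inter_filter[OF finite_Lw])
  finally show ?thesis .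
qed



definition Zs :: "nat \<Rightarrow> mpoly" where
  "Zs j = (\<Sum>i=1..j. Var i)"

lemma Zs_0 [simp]: "Zs 0 = 0"
  by (simp add: Zs_def)

lemma Zs_Suc: "Zs (Suc j) = Zs j + Var (Suc j)"
  by (simp add: Zs_def)

lemma Const_power: "Const (a ^ k) = Const a ^ k"
  by (induction k) (simp_all add: Const_mult)

lemma Const_neg1_power: "Const ((-1) ^ k) = (-1) ^ k"
  by (simp add: Const_power Const_uminus)

lemma VV_cong_fun: "(\<And>u. u \<in> Lw n \<Longrightarrow> p u = q u) \<Longrightarrow> VV n p r z = VV n q r z"
  unfolding VV_def by (intro sum.cong refl) auto

lemma VV_zero_fun: "VV n (\<lambda>u. 0) r z = 0"
  unfolding VV_def by (simp only: Const_0 mult_zero_left if_cancel sum.neutral_const)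

lemma amul_lt_snoc: "amul p (lt a) (v @ [b]) = (if b = a then p v else 0)"
proof -
  have "amul p (lt a) (v @ [b]) = (\<Sum>i\<le>Suc (length v). if i = length v then (if b = a then p v else 0) else 0)"
    unfolding amul_def length_append_singleton
  proof (intro sum.cong refl)
    fix i assume "i \<in> {..Suc (length v)}"
    show "p (take i (v @ [b])) * lt a (drop i (v @ [b])) = (if i = length v then (if b = a then p v else 0) else 0)"
    proof (cases "i = length v")
      case True then show ?thesis by (simp add: lt_def)
    next
      case False
      then have "length (drop i (v @ [b])) \<noteq> 1" by simp
      then have "drop i (v @ [b]) \<noteq> [a]" by (metis length_Cons list.size(3) One_nat_def)
      then show ?thesis using False by (simp add: lt_def)
    qed
  qed
  also have "\<dots> = (if b = a then p v else 0)" by simp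
  finally show ?thesis .
qed

lemma sum_Var_rev: "j \<le> r \<Longrightarrow> (\<Sum>i=1..j. Var (r + 1 - i)) = Zs r - Zs (r - j)"
proof (induction j)
  case 0 then show ?case by simp
next
  case (Suc j)
  then have "r - j = Suc (r - Suc j)" by simp
  then have "Zs (r - j) = Zs (r - Suc j) + Var (r - j)" by (metis Zs_Suc)
  moreover have "Suc (r - Suc j) = r - j" using Suc.prems by simp
  ultimately show ?case using Suc by (simp add: Suc_diff_le)
qed

lemma subst_Zs_rev: "j \<le> r \<Longrightarrow> subst (\<lambda>i. Var (r + 1 - i)) (Zs j) = Zs r - Zs (r - j)"
  using sum_Var_rev[of j r] by (simp add: Zs_def subst_sum)

lemma subst_Zs_push_Suc:
  "subst (\<lambda>i. if i = 1 then - (\<Sum>j=1..r. Var j) else Var (i - 1)) (Zs (Suc k)) = Zs k - Zs r"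
proof (induction k)
  case 0 then show ?case by (simp add: Zs_def)
next
  case (Suc k)
  have "subst (\<lambda>i. if i = 1 then - (\<Sum>j=1..r. Var j) else Var (i - 1)) (Zs (Suc (Suc k)))
     = subst (\<lambda>i. if i = 1 then - (\<Sum>j=1..r. Var j) else Var (i - 1)) (Zs (Suc k)) + Var (Suc k)"
    by (simp only: Zs_Suc[of "Suc k"] subst_add subst_Var) simp
  also have "\<dots> = Zs (Suc k) - Zs r" using Suc by (simp add: Zs_Suc)
  finally show ?case .
qed

lemma subst_Zs_push: "1 \<le> k \<Longrightarrow>
  subst (\<lambda>i. if i = 1 then - (\<Sum>j=1..r. Var j) else Var (i - 1)) (Zs k) = Zs (k - 1) - Zs r"
  using subst_Zs_push_Suc[of r "k - 1"] by simp

lemma subst_Zs_teru_lt: "j < m - 1 \<Longrightarrow>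
  subst (\<lambda>i. if i = m - 1 then Var (m - 1) + Var m else Var i) (Zs j) = Zs j"
  unfolding Zs_def subst_sum by (intro sum.cong refl) auto

lemma subst_Zs_teru_eq: "2 \<le> m \<Longrightarrow>
  subst (\<lambda>i. if i = m - 1 then Var (m - 1) + Var m else Var i) (Zs (m - 1)) = Zs m"
proof -
  assume "2 \<le> m"
  then obtain k where m: "m = Suc (Suc k)" by (metis add_2_eq_Suc le_Suc_ex)
  have "subst (\<lambda>i. if i = m - 1 then Var (m - 1) + Var m else Var i) (Zs (Suc k))
      = subst (\<lambda>i. if i = m - 1 then Var (m - 1) + Var m else Var i) (Zs k) + (Var (Suc k) + Var m)"
    unfolding Zs_Suc[of k] subst_add subst_Var using m by simp
  also have "\<dots> = Zs k + (Var (Suc k) + Var m)"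
    using subst_Zs_teru_lt[of k m] m by simp
  also have "\<dots> = Zs m" using m by (simp add: Zs_Suc add.assoc)
  finally show ?thesis using m by simp
qed

lemma subst_Zs_teru: "2 \<le> m \<Longrightarrow> j \<le> m - 1 \<Longrightarrow>
  subst (\<lambda>i. if i = m - 1 then Var (m - 1) + Var m else Var i) (Zs j) = (if j = m - 1 then Zs m else Zs j)"
  using subst_Zs_teru_lt[of j m] subst_Zs_teru_eq[of m] by (cases "j = m - 1") auto



lemma trans_f: "w \<noteq> 1 \<Longrightarrow> f \<in> lie_polys \<Longrightarrow> VV w f r (\<lambda>j. z j - c) = VV w f r z"
  using lie_trans[of f w r z "- c"] by (simp add: Ef_def)

lemma Zs_fun: "(\<lambda>j. \<Sum>i=1..j. Var i) = Zs"
  by (simp add: Zs_def fun_eq_iff)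

definition Yv :: "nat \<Rightarrow> nat \<Rightarrow> mpoly" where
  "Yv r = (\<lambda>j. Zs j - Zs r)"

lemma Zs_pred: "1 \<le> r \<Longrightarrow> Zs r = Zs (r - 1) + Var r"
  using Zs_Suc[of "r - 1"] by simp

context
  fixes w n :: nat and f fx fy :: alg
  assumes wn: "w = Suc n" and n1: "1 \<le> n"
    and fL: "f \<in> lie_polys"
    and fx: "\<And>v. f (v @ [X]) = fx v"
    and fy: "\<And>v. f (v @ [Y]) = fy v"
begin

lemma w1: "w \<noteq> 1" using wn n1 by simp

lemma decomp: "VV w f r z = VV n fx r z * z r + (if r = 0 then 0 else VV n fy (r - 1) z)"
  unfolding wn VV_snoc fx fy by simp

lemma M_eq: "1 \<le> r \<Longrightarrow> r \<le> w \<Longrightarrow> ma w f r = VV w f r Zs"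
  using ma_VV[of r w f] unfolding Zs_fun by simp

lemma M_Yv: "1 \<le> r \<Longrightarrow> r \<le> w \<Longrightarrow> ma w f r = VV n fy (r - 1) (Yv r)"
proof -
  assume r: "1 \<le> r" "r \<le> w"
  have "ma w f r = VV w f r (\<lambda>j. Zs j - Zs r)"
    using M_eq[OF r] trans_f[OF w1 fL, of r Zs "Zs r"] by simp
  also have "\<dots> = VV n fy (r - 1) (Yv r)"
    unfolding decomp using r by (simp add: Yv_def)
  finally show ?thesis .
qed

lemma fx_rep: "fx (replicate n X) = 0"
proof -
  have "fx (replicate n X) = f (replicate (Suc n) X)"
    using fx[of "replicate n X"] by (simp add: replicate_append_same)
  also have "\<dots> = 0" using lie_repl[OF fL, of "Suc n"] n1 by simp
  finally show ?thesis .
qed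

lemma teru_eq:
  assumes r: "1 \<le> r" "r \<le> w"
  shows "teru (ma w f) r = VV n (\<lambda>u. fy u + fx u) (r - 1) (Yv r)"
proof (cases "r = 1")
  case True
  have "teru (ma w f) r = VV n fy 0 (Yv 1)"
    using True M_Yv[OF r] by (simp add: teru_def)
  also have "\<dots> = VV n (\<lambda>u. fy u + fx u) 0 (Yv 1)"
    by (simp add: VV_add VV_depth0 fx_rep)
  finally show ?thesis using True by simp
next
  case False
  then have r2: "2 \<le> r" using r by simp
  define \<sigma> where "\<sigma> = (\<lambda>i. if i = r - 1 then Var (r - 1) + Var r else Var i)"
  have r1: "1 \<le> r - 1" "r - 1 \<le> w" using r r2 by auto
  have Yr1: "Zs (r - 1) - Zs r = - Var r"
    using Zs_pred[of r] r by simp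
  have r22: "r - 1 - 1 = r - 2" by simp
  have r22': "r - Suc (Suc 0) = r - 2" by simp
  have Mr1: "ma w f (r - 1) = VV n fx (r - 1) (Yv r) * (- Var r) + VV n fy (r - 2) (Yv r)"
  proof -
    have "ma w f (r - 1) = VV w f (r - 1) (\<lambda>j. Zs j - Zs r)"
      using M_eq[OF r1] trans_f[OF w1 fL, of "r - 1" Zs "Zs r"] by simp
    also have "\<dots> = VV n fx (r - 1) (\<lambda>j. Zs j - Zs r) * (Zs (r - 1) - Zs r) + VV n fy (r - 1 - 1) (\<lambda>j. Zs j - Zs r)"
      unfolding decomp using r2 by simp
    also have "\<dots> = VV n fx (r - 1) (Yv r) * (- Var r) + VV n fy (r - 2) (Yv r)"
      unfolding Yr1 r22 Yv_def ..
    finally show ?thesis .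
  qed
  have S: "subst \<sigma> (ma w f (r - 1)) = VV n fy (r - 2) (Yv r)"
  proof -
    define Zr where "Zr j = (if j = r - 1 then Zs r else Zs j)" for j
    have "subst \<sigma> (ma w f (r - 1)) = VV w f (r - 1) (\<lambda>j. subst \<sigma> (Zs j))"
      using M_eq[OF r1] by (simp add: VV_subst)
    also have "\<dots> = VV w f (r - 1) Zr"
      unfolding \<sigma>_def Zr_def by (rule VV_cong) (use r2 subst_Zs_teru in auto)
    also have "\<dots> = VV w f (r - 1) (\<lambda>j. Zr j - Zs r)"
      using trans_f[OF w1 fL, of "r - 1" Zr "Zs r"] by simp
    also have "\<dots> = VV n fy (r - 2) (\<lambda>j. Zr j - Zs r)"
      unfolding decomp using r2 by (simp add: Zr_def r22')
    also have "\<dots> = VV n fy (r - 2) (Yv r)"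
      by (rule VV_cong) (use r2 in \<open>auto simp: Zr_def Yv_def\<close>)
    finally show ?thesis .
  qed
  have D: "subst \<sigma> (ma w f (r - 1)) - ma w f (r - 1) = Var r * VV n fx (r - 1) (Yv r)"
    by (subst S, subst Mr1) (simp add: algebra_simps)
  have "teru (ma w f) r = ma w f r + VV n fx (r - 1) (Yv r)"
    using r2 D div_var_eq[OF D] by (simp add: teru_def \<sigma>_def)
  also have "\<dots> = VV n (\<lambda>u. fy u + fx u) (r - 1) (Yv r)"
    using M_Yv[OF r] by (simp add: VV_add)
  finally show ?thesis .
qed

lemma subst_Zs_rev': "j \<le> r \<Longrightarrow> subst (\<lambda>i. Var (Suc r - i)) (Zs j) = Zs r - Zs (r - j)"
  using subst_Zs_rev[of j r] by simp

lemma neg1_pow_even: "even k \<Longrightarrow> (-1::mpoly) ^ k = 1"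
  by (rule neg_one_even_power)

lemma mantar_eq:
  assumes r: "1 \<le> r" "r \<le> w"
  shows "mantar (ma w f) r = ma w f r"
proof -
  define \<rho> where "\<rho> = (\<lambda>i. Var (r + 1 - i))"
  have "subst \<rho> (ma w f r) = VV w f r (\<lambda>j. subst \<rho> (Zs j))"
    using M_eq[OF r] by (simp add: VV_subst)
  also have "\<dots> = VV w f r (\<lambda>j. Zs r - Zs (r - j))"
    unfolding \<rho>_def by (rule VV_cong) (simp add: subst_Zs_rev')
  also have "\<dots> = VV w f r (\<lambda>j. (Zs r - Zs (r - j)) - Zs r)"
    using trans_f[OF w1 fL, of r "\<lambda>j. Zs r - Zs (r - j)" "Zs r"] by simp
  also have "\<dots> = VV w f r (\<lambda>j. (-1) * Zs (r - j))"
    by simp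
  also have "\<dots> = (-1) ^ (w - r) * VV w f r (\<lambda>j. Zs (r - j))"
    by (rule VV_scale)
  also have "VV w f r (\<lambda>j. Zs (r - j)) = VV w (\<lambda>u. f (rev u)) r Zs"
    by (rule VV_rev)
  also have "\<dots> = VV w (\<lambda>u. (-1) ^ Suc w * f u) r Zs"
    by (rule VV_cong_fun) (simp add: lie_anti[OF fL] Lw_def)
  also have "\<dots> = (-1) ^ Suc w * VV w f r Zs"
    by (simp only: VV_smult Const_neg1_power)
  finally have e: "subst \<rho> (ma w f r) = (-1) ^ (w - r) * ((-1) ^ Suc w * ma w f r)"
    using M_eq[OF r] by simp
  have ev: "even ((r - 1) + (w - r) + Suc w)" using r by simp
  have "mantar (ma w f) r = (-1) ^ (r - 1) * ((-1) ^ (w - r) * ((-1) ^ Suc w * ma w f r))"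
    using r e by (simp add: mantar_def \<rho>_def)
  also have "\<dots> = (-1) ^ ((r - 1) + (w - r) + Suc w) * ma w f r"
    by (simp add: power_add mult.assoc)
  also have "\<dots> = ma w f r"
    using neg1_pow_even[OF ev] by simp
  finally show ?thesis .
qed

lemma teru_mantar:
  assumes r: "1 \<le> r" "r \<le> w"
  shows "teru (mantar (ma w f)) r = teru (ma w f) r"
proof (cases "r \<le> 1")
  case True then show ?thesis using mantar_eq[OF r] by (simp add: teru_def)
next
  case False
  then have "1 \<le> r - 1" "r - 1 \<le> w" using r by auto
  then show ?thesis using False mantar_eq[OF r] mantar_eq[of "r - 1"] by (simp add: teru_def)
qed

lemma rhs_eq:
  assumes r: "1 \<le> r" "r \<le> w"
  shows "push (mantar (teru (mantar (ma w f)))) r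
     = (-1) ^ n * VV n (\<lambda>u. fy (rev u) + fx (rev u)) (r - 1) (Yv r)"
proof -
  define g where "g = (\<lambda>u. fy u + fx u)"
  define \<rho> where "\<rho> = (\<lambda>i. Var (r + 1 - i))"
  define \<pi> where "\<pi> = (\<lambda>i. if i = 1 then - (\<Sum>j=1..r. Var j) else Var (i - 1))"
  have T: "teru (mantar (ma w f)) r = VV n g (r - 1) (Yv r)"
    using teru_mantar[OF r] teru_eq[OF r] by (simp add: g_def)
  have "subst \<rho> (VV n g (r - 1) (Yv r)) = VV n g (r - 1) (\<lambda>j. subst \<rho> (Zs j) - subst \<rho> (Zs r))"
    by (simp add: VV_subst Yv_def subst_diff)
  also have "\<dots> = VV n g (r - 1) (\<lambda>j. - Zs (r - j))"
    unfolding \<rho>_def by (rule VV_cong) (use r in \<open>simp add: subst_Zs_rev'\<close>)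
  finally have m: "mantar (teru (mantar (ma w f))) r = (-1) ^ (r - 1) * VV n g (r - 1) (\<lambda>j. - Zs (r - j))"
    using r T by (simp add: mantar_def \<rho>_def)
  have "push (mantar (teru (mantar (ma w f)))) r = (-1) ^ (r - 1) * VV n g (r - 1) (\<lambda>j. - subst \<pi> (Zs (r - j)))"
    using r m by (simp add: push_def \<pi>_def subst_mult subst_neg1_power VV_subst subst_uminus)
  also have "VV n g (r - 1) (\<lambda>j. - subst \<pi> (Zs (r - j))) = VV n g (r - 1) (\<lambda>j. (-1) * Yv r ((r - 1) - j))"
  proof (rule VV_cong)
    fix j assume j: "j \<le> r - 1"
    then have "1 \<le> r - j" using r by simp
    then have "subst \<pi> (Zs (r - j)) = Zs (r - j - 1) - Zs r"
      unfolding \<pi>_def by (rule subst_Zs_push)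
    moreover have "r - j - 1 = r - 1 - j" by simp
    ultimately show "- subst \<pi> (Zs (r - j)) = (-1) * Yv r ((r - 1) - j)"
      by (simp add: Yv_def)
  qed
  also have "\<dots> = (-1) ^ (n - (r - 1)) * VV n g (r - 1) (\<lambda>j. Yv r ((r - 1) - j))"
    by (rule VV_scale)
  also have "VV n g (r - 1) (\<lambda>j. Yv r ((r - 1) - j)) = VV n (\<lambda>u. g (rev u)) (r - 1) (Yv r)"
    by (rule VV_rev)
  finally have "push (mantar (teru (mantar (ma w f)))) r
      = (-1) ^ ((r - 1) + (n - (r - 1))) * VV n (\<lambda>u. g (rev u)) (r - 1) (Yv r)"
    by (simp add: power_add mult.assoc)
  also have "(r - 1) + (n - (r - 1)) = n" using r wn by simp
  finally show ?thesis by (simp add: g_def)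
qed

lemma senary_iff:
  assumes r: "1 \<le> r" "r \<le> w"
  shows "teru (ma w f) r = push (mantar (teru (mantar (ma w f)))) r
     \<longleftrightarrow> VV n (\<lambda>u. (fy u + fx u) - (-1) ^ n * (fy (rev u) + fx (rev u))) (r - 1) (Yv r) = 0"
  unfolding teru_eq[OF r] rhs_eq[OF r] VV_diff VV_smult Const_neg1_power by simp

end



fun Kk :: "nat \<Rightarrow> letter list \<Rightarrow> (nat \<Rightarrow>\<^sub>0 nat)" where
  "Kk s [] = 0"
| "Kk s (X # u) = Poly_Mapping.single s 1 + Kk s u"
| "Kk s (Y # u) = Kk (Suc s) u"

lemma vm_Var: "vm u (\<lambda>j. Var (j + s)) = Poly_Mapping.single (Kk s u) 1"
proof (induction u arbitrary: s)
  case Nil then show ?case by simp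
next
  case (Cons a u)
  show ?case
  proof (cases a)
    case X
    then show ?thesis using Cons.IH[of s] by (simp add: Var_def mult_single)
  next
    case Y
    then show ?thesis using Cons.IH[of "Suc s"] by simp
  qed
qed

lemma Kk_low: "i < s \<Longrightarrow> Poly_Mapping.lookup (Kk s u) i = 0"
proof (induction u arbitrary: s)
  case Nil then show ?case by simp
next
  case (Cons a u)
  then show ?case by (cases a) (simp_all add: lookup_add lookup_single)
qed

lemma Kk_X_at: "Poly_Mapping.lookup (Kk s (X # u)) s \<noteq> 0"
  by (simp add: lookup_add)

lemma Kk_Y_at: "Poly_Mapping.lookup (Kk s (Y # u)) s = 0"
  by (simp add: Kk_low)

lemma Kk_inj: "Kk s u = Kk s v \<Longrightarrow> ny u = ny v \<Longrightarrow> u = v"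
proof (induction u arbitrary: s v)
  case Nil
  show ?case
  proof (cases v)
    case Nil then show ?thesis by simp
  next
    case (Cons b v')
    show ?thesis
    proof (cases b)
      case X
      then have "Poly_Mapping.lookup (Kk s v) s \<noteq> 0" using Cons Kk_X_at by simp
      then show ?thesis using Nil.prems by simp
    next
      case Y
      then show ?thesis using Nil.prems Cons by simp
    qed
  qed
next
  case (Cons a u)
  show ?case
  proof (cases v)
    case Nil
    then show ?thesis
    proof (cases a)
      case X
      then have "Poly_Mapping.lookup (Kk s (a # u)) s \<noteq> 0" using Kk_X_at by simp
      then show ?thesis using Cons.prems Nil by simp
    next
      case Y
      then show ?thesis using Cons.prems Nil by simp
    qed
  next
    case (Cons b v')
    note vb = this
    show ?thesis
    proof (cases a; cases b)
      assume "a = X" "b = X"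
      then show ?thesis using Cons.prems vb Cons.IH[of s v'] by simp
    next
      assume ab: "a = X" "b = Y"
      have "Poly_Mapping.lookup (Kk s (a # u)) s \<noteq> 0" using ab Kk_X_at by simp
      moreover have "Poly_Mapping.lookup (Kk s v) s = 0" using ab vb Kk_Y_at by simp
      ultimately show ?thesis using Cons.prems by simp
    next
      assume ab: "a = Y" "b = X"
      have "Poly_Mapping.lookup (Kk s v) s \<noteq> 0" using ab vb Kk_X_at by simp
      moreover have "Poly_Mapping.lookup (Kk s (a # u)) s = 0" using ab Kk_Y_at by simp
      ultimately show ?thesis using Cons.prems by simp
    next
      assume "a = Y" "b = Y"
      then show ?thesis using Cons.prems vb Cons.IH[of "Suc s" v'] by simp
    qed
  qed
qed

lemma extract_coeff:
  assumes z: "VV n h d (\<lambda>j. Var j) = 0" and u: "u \<in> Lw n" "ny u = d"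
  shows "h u = 0"
proof -
  have vmv: "vm v (\<lambda>j. Var j) = Poly_Mapping.single (Kk 0 v) 1" for v
    using vm_Var[of v 0] by simp
  have "Poly_Mapping.lookup (VV n h d (\<lambda>j. Var j)) (Kk 0 u)
      = (\<Sum>v\<in>Lw n. if v = u then h u else 0)"
    unfolding VV_def lookup_sum
  proof (intro sum.cong refl)
    fix v assume v: "v \<in> Lw n"
    have "Poly_Mapping.lookup (if ny v = d then Const (h v) * vm v (\<lambda>j. Var j) else 0) (Kk 0 u)
       = (if ny v = d \<and> Kk 0 v = Kk 0 u then h v else 0)"
      by (simp add: vmv Const_def mult_single lookup_single when_def)
    also have "\<dots> = (if v = u then h u else 0)"
      using Kk_inj[of 0 v u] u by auto
    finally show "Poly_Mapping.lookup (if ny v = d then Const (h v) * vm v (\<lambda>j. Var j) else 0) (Kk 0 u)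
       = (if v = u then h u else 0)" .
  qed
  also have "\<dots> = h u" using u by simp
  finally show ?thesis using z by simp
qed

definition Vr :: "nat \<Rightarrow> nat \<Rightarrow> mpoly" where
  "Vr r k = (if k < r then Var k else 0)"

lemma subst_Zs_tele: "subst (\<lambda>i. Vr r i - Vr r (i - 1)) (Zs j) = Vr r j - Vr r 0"
proof (induction j)
  case 0 then show ?case by simp
next
  case (Suc j)
  then show ?case by (simp add: Zs_Suc subst_add)
qed

lemma subst_Yv: "j < r \<Longrightarrow> subst (\<lambda>i. Vr r i - Vr r (i - 1)) (Yv r j) = Var j"
  unfolding Yv_def subst_diff subst_Zs_tele by (simp add: Vr_def)

theorem lemma3p2:
  fixes w :: nat and f fx fy :: alg
  assumes "w > 2"
    and "f \<in> L w"
    and "homog (w - 1) fx" and "homog (w - 1) fy"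
    and "f = (\<lambda>u. amul fx (lt X) u + amul fy (lt Y) u)"
  defines "g \<equiv> (\<lambda>u. fy u + fx u)"
  shows "(g = (\<lambda>u. (-1) ^ (w - 1) * anti g u))
     \<longleftrightarrow> (\<forall>r. 1 \<le> r \<and> r \<le> w \<longrightarrow>
            teru (ma w f) r = push (mantar (teru (mantar (ma w f)))) r)"
proof -
  define n where "n = w - 1"
  have wn: "w = Suc n" and n1: "1 \<le> n" using assms(1) by (auto simp: n_def)
  have fL: "f \<in> lie_polys" using assms(2) by (simp add: L_def)
  have fx: "\<And>v. f (v @ [X]) = fx v" using assms(5) by (simp add: amul_lt_snoc)
  have fy: "\<And>v. f (v @ [Y]) = fy v" using assms(5) by (simp add: amul_lt_snoc)
  define h where "h u = (fy u + fx u) - (-1) ^ n * (fy (rev u) + fx (rev u))" for u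
  have sen: "teru (ma w f) r = push (mantar (teru (mantar (ma w f)))) r
     \<longleftrightarrow> VV n h (r - 1) (Yv r) = 0" if "1 \<le> r" "r \<le> w" for r
    using senary_iff[OF wn n1 fL fx fy that] by (simp add: h_def[abs_def])
  have lhs: "(g = (\<lambda>u. (-1) ^ (w - 1) * anti g u)) \<longleftrightarrow> (\<forall>u. h u = 0)"
    by (auto simp: g_def anti_def h_def n_def fun_eq_iff)
  show ?thesis
  proof
    assume "g = (\<lambda>u. (-1) ^ (w - 1) * anti g u)"
    then have "\<forall>u. h u = 0" using lhs by simp
    then have "h = (\<lambda>u. 0)" by auto
    then show "\<forall>r. 1 \<le> r \<and> r \<le> w \<longrightarrow> teru (ma w f) r = push (mantar (teru (mantar (ma w f)))) r"
      using sen VV_zero_fun by auto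
  next
    assume R: "\<forall>r. 1 \<le> r \<and> r \<le> w \<longrightarrow> teru (ma w f) r = push (mantar (teru (mantar (ma w f)))) r"
    have "h u = 0" for u
    proof (cases "length u = n")
      case False
      then have "fx u = 0" "fy u = 0" "fx (rev u) = 0" "fy (rev u) = 0"
        using assms(3,4) by (auto simp: homog_def n_def)
      then show ?thesis by (simp add: h_def)
    next
      case True
      define d where "d = ny u"
      have d: "d \<le> n" using ny_le[of u] True by (simp add: d_def)
      have "VV n h d (Yv (Suc d)) = 0"
        using R sen[of "Suc d"] d wn by simp
      then have "subst (\<lambda>i. Vr (Suc d) i - Vr (Suc d) (i - 1)) (VV n h d (Yv (Suc d))) = 0"
        by simp
      then have "VV n h d (\<lambda>j. subst (\<lambda>i. Vr (Suc d) i - Vr (Suc d) (i - 1)) (Yv (Suc d) j)) = 0"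
        by (simp add: VV_subst)
      moreover have "VV n h d (\<lambda>j. subst (\<lambda>i. Vr (Suc d) i - Vr (Suc d) (i - 1)) (Yv (Suc d) j))
          = VV n h d (\<lambda>j. Var j)"
      proof (rule VV_cong)
        fix j assume "j \<le> d"
        then show "subst (\<lambda>i. Vr (Suc d) i - Vr (Suc d) (i - 1)) (Yv (Suc d) j) = Var j"
          by (intro subst_Yv) simp
      qed
      ultimately have "VV n h d (\<lambda>j. Var j) = 0" by simp
      then show ?thesis by (rule extract_coeff) (use True in \<open>simp_all add: Lw_def d_def\<close>)
    qed
    then show "g = (\<lambda>u. (-1) ^ (w - 1) * anti g u)" using lhs by simp
  qed
qed

end
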